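(* Let $\lambda$ be a partition with $n$ parts and let $\eta \in UGC_\lambda(n)$. Then the gapless $\lambda$-tuple $\Delta_\lambda(\eta)$ attains maximum efficiency.
   Context: Fix an integer $n \geq 1$ and write $[k] = \{1,\dots,k\}$. A partition is $\lambda = (\lambda_1,\dots,\lambda_n)$ with $\lambda_1 \geq \dots \geq \lambda_n \geq 0$ integers. Let $R_\lambda \subseteq [n-1]$ be the set of $q \in [n-1]$ with $\lambda_q > \lambda_{q+1}$; write its elements $q_1 < \dots < q_r$, and set $q_0 := 0$, $q_{r+1} := n$. For $h \in [r+1]$ the $h$-th carrel is the index interval $\{q_{h-1}+1,\dots,q_h\}$. A $\lambda$-tuple is an $n$-tuple $\beta$ with entries in $[n]$, considered with this carrel structure; it is upper if $\beta_i \geq i$ for all $i$. $U_\lambda(n)$ is the set of upper $\lambda$-tuples. Critical indices: for $\beta \in U_\lambda(n)$ and $h \in [r+1]$, set $x_1 := q_h$; given $x_{u-1}$, if some index $x$ with $q_{h-1} < x < x_{u-1}$ satisfies $\beta_{x_{u-1}} - \beta_x > x_{u-1} - x$, let $x_u$ be the largest such $x$, otherwise stop. The $x_u$ are the critical indices of $\beta$ in carrel $h$; the pairs $(x_u,\beta_{x_u})$ form its critical list. For $i \in [n]$ let $x(i)$ be the smallest critical index in the carrel of $i$ with $x(i) \geq i$. The $\lambda$-core is $\Delta_\lambda(\beta) := \delta$ with $\delta_i := \beta_{x(i)} - (x(i)-i)$; the $\lambda$-platform is $\Xi_\lambda(\beta) := \xi$ with $\xi_i := \beta_{x(i)}$.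 The critical list is a flag critical list if for every $h \in [r]$, $\beta_{q_h} \leq \beta_k$ where $k$ is the smallest critical index of $\beta$ in carrel $h+1$. $UGC_\lambda(n)$: the $\beta \in U_\lambda(n)$ with flag critical list. $UBP_\lambda(n)$: the $\beta \in U_\lambda(n)$ with $\beta \leq \Xi_\lambda(\beta)$ entrywise. A gapless $\lambda$-tuple is a $\beta \in U_\lambda(n)$ with flag critical list whose entries strictly increase within each carrel. A semistandard tableau of shape $\lambda$ is a filling of the Young diagram of $\lambda$ (row $i$ has $\lambda_i$ boxes) with values in $[n]$, weakly increasing along rows and strictly increasing down columns. For $\beta \in U_\lambda(n)$, $s_\lambda(\beta;x) := \sum_T \prod_{k} x_k^{\theta_k(T)}$ over the semistandard tableaux $T$ of shape $\lambda$ whose values in row $i$ are all at most $\beta_i$, where $\theta_k(T)$ is the number of values of $T$ equal to $k$. For integers $u$, $i \geq 1$, $k \geq 1$: $h_u(i,k;x) := 0$ if $u<0$, and otherwise $h_u(i,k;x) := \sum x_{t_1}\cdots x_{t_u}$ over $i \leq t_1 \leq \dots \leq t_u \leq k$. For $\beta \in U_\lambda(n)$ the Gessel–Viennot determinant of $\beta$ is the $n\times n$ matrix determinant with $(i,j)$ entry $h_{\lambda_j - j + i}(i,\beta_j;x)$. An element $\eta \in UGC_\lambda(n) \cap UBP_\lambda(n)$ attains maximum efficiency if the total number of monomials appearing among the entries of its Gessel–Viennot matrix is smaller than that for the Gessel–Viennot matrix of any other $\eta' \in UGC_\lambda(n) \cap UBP_\lambda(n)$ with $s_\lambda(\eta';x)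 = s_\lambda(\eta;x)$. *)

theory Defs
  imports Main "HOL-Library.Multiset"
begin

text \<open>Conventions. n-tuples and partitions are functions on nat, meaningful on the
index set {1..n}. A lambda-tuple is normalised to be 0 outside {1..n}, so that equality
of tuples is equality of functions.\<close>

definition is_partition :: "nat \<Rightarrow> (nat \<Rightarrow> nat) \<Rightarrow> bool" where
  "is_partition n lam \<longleftrightarrow> (\<forall>i j. 1 \<le> i \<longrightarrow> i \<le> j \<longrightarrow> j \<le> n \<longrightarrow> lam j \<le> lam i)"

definition Rset :: "nat \<Rightarrow> (nat \<Rightarrow> nat) \<Rightarrow> nat set" where
  "Rset n lam = {q \<in> {1..n-1}. lam q > lam (q+1)}"

text \<open>For an index i in {1..n}: its carrel is {carrel_lo i + 1 .. carrel_hi i}.\<close>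
definition carrel_lo :: "nat \<Rightarrow> (nat \<Rightarrow> nat) \<Rightarrow> nat \<Rightarrow> nat" where
  "carrel_lo n lam i = Max (insert 0 {q \<in> Rset n lam. q < i})"

definition carrel_hi :: "nat \<Rightarrow> (nat \<Rightarrow> nat) \<Rightarrow> nat \<Rightarrow> nat" where
  "carrel_hi n lam i = Min (insert n {q \<in> Rset n lam. i \<le> q})"

definition U_set :: "nat \<Rightarrow> (nat \<Rightarrow> nat) set" where
  "U_set n = {\<beta>. (\<forall>i\<in>{1..n}. i \<le> \<beta> i \<and> \<beta> i \<le> n) \<and> (\<forall>i. i \<notin> {1..n} \<longrightarrow> \<beta> i = 0)}"

definition crit_step_cond :: "(nat \<Rightarrow> nat) \<Rightarrow> nat \<Rightarrow> nat \<Rightarrow> nat \<Rightarrow> bool" where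
  "crit_step_cond \<beta> lo x y \<longleftrightarrow> lo < y \<and> y < x \<and> int (\<beta> x) - int (\<beta> y) > int x - int y"

inductive_set crit :: "(nat \<Rightarrow> nat) \<Rightarrow> nat \<Rightarrow> nat \<Rightarrow> nat set"
  for \<beta> :: "nat \<Rightarrow> nat" and lo :: nat and hi :: nat where
  crit_start: "hi \<in> crit \<beta> lo hi"
| crit_next: "x \<in> crit \<beta> lo hi \<Longrightarrow> \<exists>y. crit_step_cond \<beta> lo x y \<Longrightarrow>
      (GREATEST y. crit_step_cond \<beta> lo x y) \<in> crit \<beta> lo hi"

definition xcrit :: "nat \<Rightarrow> (nat \<Rightarrow> nat) \<Rightarrow> (nat \<Rightarrow> nat) \<Rightarrow> nat \<Rightarrow> nat" where
  "xcrit n lam \<beta> i = (LEAST x. x \<in> crit \<beta> (carrel_lo n lam i) (carrel_hi n lam i) \<and> i \<le> x)"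

definition core :: "nat \<Rightarrow> (nat \<Rightarrow> nat) \<Rightarrow> (nat \<Rightarrow> nat) \<Rightarrow> (nat \<Rightarrow> nat)" where
  "core n lam \<beta> = (\<lambda>i. if i \<in> {1..n}
      then nat (int (\<beta> (xcrit n lam \<beta> i)) - (int (xcrit n lam \<beta> i) - int i)) else 0)"

definition platform :: "nat \<Rightarrow> (nat \<Rightarrow> nat) \<Rightarrow> (nat \<Rightarrow> nat) \<Rightarrow> (nat \<Rightarrow> nat)" where
  "platform n lam \<beta> = (\<lambda>i. if i \<in> {1..n} then \<beta> (xcrit n lam \<beta> i) else 0)"

text \<open>Flag critical list: for each q_h in R_lambda, beta(q_h) is at most beta at the
smallest critical index of carrel h+1 = {q_h+1 .. carrel_hi (q_h+1)}.\<close>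
definition flag_crit :: "nat \<Rightarrow> (nat \<Rightarrow> nat) \<Rightarrow> (nat \<Rightarrow> nat) \<Rightarrow> bool" where
  "flag_crit n lam \<beta> \<longleftrightarrow>
     (\<forall>q \<in> Rset n lam. \<beta> q \<le> \<beta> (Min (crit \<beta> q (carrel_hi n lam (q+1)))))"

definition UGC :: "nat \<Rightarrow> (nat \<Rightarrow> nat) \<Rightarrow> (nat \<Rightarrow> nat) set" where
  "UGC n lam = {\<beta> \<in> U_set n. flag_crit n lam \<beta>}"

definition UBP :: "nat \<Rightarrow> (nat \<Rightarrow> nat) \<Rightarrow> (nat \<Rightarrow> nat) set" where
  "UBP n lam = {\<beta> \<in> U_set n. \<forall>i\<in>{1..n}. \<beta> i \<le> platform n lam \<beta> i}"

definition gapless :: "nat \<Rightarrow> (nat \<Rightarrow> nat) \<Rightarrow> (nat \<Rightarrow> nat) \<Rightarrow> bool" where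
  "gapless n lam \<beta> \<longleftrightarrow> \<beta> \<in> UGC n lam \<and>
     (\<forall>i. 1 \<le> i \<longrightarrow> i < n \<longrightarrow> i \<notin> Rset n lam \<longrightarrow> \<beta> i < \<beta> (i+1))"

text \<open>Semistandard tableaux of shape lambda, as fillings T i j (row i, column j),
normalised to 0 outside the Young diagram.\<close>
definition diagram :: "nat \<Rightarrow> (nat \<Rightarrow> nat) \<Rightarrow> (nat \<times> nat) set" where
  "diagram n lam = {(i,j). 1 \<le> i \<and> i \<le> n \<and> 1 \<le> j \<and> j \<le> lam i}"

definition flagged_ssyt :: "nat \<Rightarrow> (nat \<Rightarrow> nat) \<Rightarrow> (nat \<Rightarrow> nat) \<Rightarrow> (nat \<Rightarrow> nat \<Rightarrow> nat) \<Rightarrow> bool" where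
  "flagged_ssyt n lam \<beta> T \<longleftrightarrow>
     (\<forall>(i,j) \<in> diagram n lam. 1 \<le> T i j \<and> T i j \<le> n \<and> T i j \<le> \<beta> i) \<and>
     (\<forall>i j. (i,j) \<notin> diagram n lam \<longrightarrow> T i j = 0) \<and>
     (\<forall>i j. (i,j) \<in> diagram n lam \<longrightarrow> (i,j+1) \<in> diagram n lam \<longrightarrow> T i j \<le> T i (j+1)) \<and>
     (\<forall>i j. (i,j) \<in> diagram n lam \<longrightarrow> (i+1,j) \<in> diagram n lam \<longrightarrow> T i j < T (i+1) j)"

definition content :: "nat \<Rightarrow> (nat \<Rightarrow> nat) \<Rightarrow> (nat \<Rightarrow> nat \<Rightarrow> nat) \<Rightarrow> (nat \<Rightarrow> nat)" where
  "content n lam T = (\<lambda>k. card {(i,j) \<in> diagram n lam. T i j = k})"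

text \<open>The polynomial s_lambda(beta;x), represented by its coefficient function:
the coefficient of the monomial prod_k x_k^(theta k).\<close>
definition schur_coeff :: "nat \<Rightarrow> (nat \<Rightarrow> nat) \<Rightarrow> (nat \<Rightarrow> nat) \<Rightarrow> (nat \<Rightarrow> nat) \<Rightarrow> nat" where
  "schur_coeff n lam \<beta> \<theta> = card {T. flagged_ssyt n lam \<beta> T \<and> content n lam T = \<theta>}"

text \<open>The polynomial h_u(i,k;x), represented by its coefficient function on monomials;
a monomial x_{t_1}...x_{t_u} is represented by the multiset {#t_1,...,t_u#}.\<close>
definition h_coeff :: "int \<Rightarrow> nat \<Rightarrow> nat \<Rightarrow> nat multiset \<Rightarrow> nat" where
  "h_coeff u i k M = (if 0 \<le> u \<and> size M = nat u \<and> set_mset M \<subseteq> {i..k} then 1 else 0)"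

definition num_monomials :: "(nat multiset \<Rightarrow> nat) \<Rightarrow> nat" where
  "num_monomials p = card {M. p M \<noteq> 0}"

text \<open>Total number of monomials among the entries of the Gessel--Viennot matrix,
with (i,j) entry h_{lambda_j - j + i}(i, beta_j; x).\<close>
definition gv_count :: "nat \<Rightarrow> (nat \<Rightarrow> nat) \<Rightarrow> (nat \<Rightarrow> nat) \<Rightarrow> nat" where
  "gv_count n lam \<beta> = (\<Sum>i\<in>{1..n}. \<Sum>j\<in>{1..n}.
      num_monomials (h_coeff (int (lam j) - int j + int i) i (\<beta> j)))"

definition max_efficiency :: "nat \<Rightarrow> (nat \<Rightarrow> nat) \<Rightarrow> (nat \<Rightarrow> nat) \<Rightarrow> bool" where
  "max_efficiency n lam \<eta> \<longleftrightarrow> \<eta> \<in> UGC n lam \<inter> UBP n lam \<and>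
     (\<forall>\<eta>' \<in> UGC n lam \<inter> UBP n lam. \<eta>' \<noteq> \<eta> \<longrightarrow>
        schur_coeff n lam \<eta>' = schur_coeff n lam \<eta> \<longrightarrow>
        gv_count n lam \<eta> < gv_count n lam \<eta>')"

end

theory Submission
  imports Defs
begin

lemma Rset_bounds: "q \<in> Rset n lam \<Longrightarrow> 1 \<le> q \<and> q < n \<and> lam (q+1) < lam q"
  unfolding Rset_def by auto

lemma finite_Rset: "finite (Rset n lam)"
  unfolding Rset_def by auto

lemma hi_props:
  assumes "1 \<le> i" "i \<le> n"
  shows "i \<le> carrel_hi n lam i \<and> carrel_hi n lam i \<le> n
    \<and> (carrel_hi n lam i < n \<longrightarrow> carrel_hi n lam i \<in> Rset n lam)
    \<and> (\<forall>q\<in>Rset n lam. i \<le> q \<longrightarrow> carrel_hi n lam i \<le> q)"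
proof -
  let ?S = "insert n {q \<in> Rset n lam. i \<le> q}"
  have f: "finite ?S" using finite_Rset by auto
  have m: "Min ?S \<in> ?S" using f by (intro Min_in) auto
  have le: "\<And>x. x \<in> ?S \<Longrightarrow> Min ?S \<le> x" using f by auto
  show ?thesis unfolding carrel_hi_def using m le assms by fastforce
qed

lemma lo_props:
  assumes "1 \<le> i"
  shows "carrel_lo n lam i < i \<and> (0 < carrel_lo n lam i \<longrightarrow> carrel_lo n lam i \<in> Rset n lam)
    \<and> (\<forall>q\<in>Rset n lam. q < i \<longrightarrow> q \<le> carrel_lo n lam i)"
proof -
  let ?S = "insert 0 {q \<in> Rset n lam. q < i}"
  have f: "finite ?S" using finite_Rset by auto
  have m: "Max ?S \<in> ?S" using f by (intro Max_in) auto
  have le: "\<And>x. x \<in> ?S \<Longrightarrow> x \<le> Max ?S" using f by auto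
  show ?thesis unfolding carrel_lo_def using m le assms by fastforce
qed

lemma carrel_noR:
  assumes "1 \<le> i" "i \<le> n" "i \<le> k" "k < carrel_hi n lam i"
  shows "k \<notin> Rset n lam"
  using hi_props[OF assms(1,2)] assms by force

lemma same_carrel:
  assumes "1 \<le> i" "i \<le> n" "i \<le> r" "r \<le> carrel_hi n lam i"
  shows "carrel_hi n lam r = carrel_hi n lam i \<and> carrel_lo n lam r = carrel_lo n lam i"
proof -
  have hi: "i \<le> carrel_hi n lam i" "carrel_hi n lam i \<le> n"
    "carrel_hi n lam i < n \<longrightarrow> carrel_hi n lam i \<in> Rset n lam"
    "\<forall>q\<in>Rset n lam. i \<le> q \<longrightarrow> carrel_hi n lam i \<le> q"
    using hi_props[OF assms(1,2)] by auto
  have rn: "1 \<le> r" "r \<le> n" using assms hi by auto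
  have hr: "r \<le> carrel_hi n lam r" "carrel_hi n lam r \<le> n"
    "carrel_hi n lam r < n \<longrightarrow> carrel_hi n lam r \<in> Rset n lam"
    "\<forall>q\<in>Rset n lam. r \<le> q \<longrightarrow> carrel_hi n lam r \<le> q"
    using hi_props[OF rn] by auto
  have "carrel_hi n lam r = carrel_hi n lam i"
  proof (rule antisym)
    show "carrel_hi n lam r \<le> carrel_hi n lam i"
      using hi hr assms by (cases "carrel_hi n lam i < n") auto
    show "carrel_hi n lam i \<le> carrel_hi n lam r"
      using hi hr assms by (cases "carrel_hi n lam r < n") auto
  qed
  moreover have "carrel_lo n lam r = carrel_lo n lam i"
  proof -
    have li: "carrel_lo n lam i < i" "0 < carrel_lo n lam i \<longrightarrow> carrel_lo n lam i \<in> Rset n lam"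
      "\<forall>q\<in>Rset n lam. q < i \<longrightarrow> q \<le> carrel_lo n lam i" using lo_props[OF assms(1)] by auto
    have lr: "carrel_lo n lam r < r" "0 < carrel_lo n lam r \<longrightarrow> carrel_lo n lam r \<in> Rset n lam"
      "\<forall>q\<in>Rset n lam. q < r \<longrightarrow> q \<le> carrel_lo n lam r" using lo_props[OF rn(1)] by auto
    have "carrel_lo n lam r < i"
    proof (rule ccontr)
      assume "\<not> carrel_lo n lam r < i"
      hence "i \<le> carrel_lo n lam r" by simp
      moreover have "carrel_lo n lam r \<in> Rset n lam" using lr calculation assms by auto
      ultimately have "carrel_hi n lam i \<le> carrel_lo n lam r" using hi by auto
      thus False using lr assms by auto
    qed
    show ?thesis
    proof (rule antisym)
      show "carrel_lo n lam r \<le> carrel_lo n lam i"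
        using li lr \<open>carrel_lo n lam r < i\<close> by (cases "0 < carrel_lo n lam r") auto
      show "carrel_lo n lam i \<le> carrel_lo n lam r"
        using li lr assms by (cases "0 < carrel_lo n lam i") auto
    qed
  qed
  ultimately show ?thesis by simp
qed

lemma lam_const:
  assumes "is_partition n lam" "1 \<le> i" "i \<le> n" "i \<le> r" "r \<le> carrel_hi n lam i"
  shows "lam r = lam i"
  using assms(4,5)
proof (induction r rule: dec_induct)
  case base then show ?case by simp
next
  case (step k)
  have "k \<notin> Rset n lam" using carrel_noR[OF assms(2,3) step(1)] step by simp
  moreover have "k < n" using hi_props[OF assms(2,3), where lam=lam] step by auto
  ultimately have "lam k \<le> lam (k+1)" using step assms unfolding Rset_def by auto
  moreover have "lam (k+1) \<le> lam k" using assms(1) step assms(2) \<open>k<n\<close>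
    unfolding is_partition_def by auto
  ultimately show ?case using step by simp
qed

lemma lam_drop:
  assumes "is_partition n lam" "1 \<le> i" "i \<le> n" "carrel_hi n lam i < r" "r \<le> n"
  shows "lam r < lam i"
proof -
  let ?h = "carrel_hi n lam i"
  have h: "i \<le> ?h" "?h \<in> Rset n lam" using hi_props[OF assms(2,3)] assms by auto
  have "lam (?h+1) < lam ?h" using Rset_bounds[OF h(2)] by simp
  moreover have "lam r \<le> lam (?h+1)" using assms(1) assms(4,5) h unfolding is_partition_def by auto
  moreover have "lam ?h = lam i" using lam_const[OF assms(1,2,3) h(1)] by simp
  ultimately show ?thesis by simp
qed

lemma hi_of_R:
  assumes "q \<in> Rset n lam"
  shows "carrel_hi n lam q = q"
proof -
  have q: "1 \<le> q" "q \<le> n" using Rset_bounds[OF assms] by auto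
  show ?thesis using hi_props[OF q, where lam=lam] assms by (meson antisym order_refl)
qed

lemma lo_of_R:
  assumes "q \<in> Rset n lam"
  shows "carrel_lo n lam (q+1) = q"
proof -
  have "carrel_lo n lam (q+1) < q+1" "\<forall>p\<in>Rset n lam. p < q+1 \<longrightarrow> p \<le> carrel_lo n lam (q+1)"
    using lo_props[of "q+1" n lam] by auto
  thus ?thesis using assms by fastforce
qed

lemma greatest_cond:
  assumes "\<exists>y. crit_step_cond \<beta> lo x y"
  shows "crit_step_cond \<beta> lo x (GREATEST y. crit_step_cond \<beta> lo x y)"
    "\<And>y. crit_step_cond \<beta> lo x y \<Longrightarrow> y \<le> (GREATEST y. crit_step_cond \<beta> lo x y)"
proof -
  obtain y where y: "crit_step_cond \<beta> lo x y" using assms by blast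
  have b: "\<And>z. crit_step_cond \<beta> lo x z \<Longrightarrow> z \<le> x" unfolding crit_step_cond_def by auto
  show "crit_step_cond \<beta> lo x (GREATEST y. crit_step_cond \<beta> lo x y)"
    using GreatestI_nat[of "crit_step_cond \<beta> lo x", OF y b] by blast
  show "\<And>y. crit_step_cond \<beta> lo x y \<Longrightarrow> y \<le> (GREATEST y. crit_step_cond \<beta> lo x y)"
    using Greatest_le_nat b by blast
qed

lemma crit_bounds:
  assumes "x \<in> crit \<beta> lo hi"
  shows "x \<le> hi \<and> (x = hi \<or> lo < x)"
  using assms
proof (induction rule: crit.induct)
  case crit_start then show ?case by simp
next
  case (crit_next x)
  from greatest_cond(1)[OF crit_next(2)] crit_next(3) show ?case
    unfolding crit_step_cond_def by auto
qed

lemma crit_min: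
  assumes "x \<in> crit \<beta> lo hi"
  shows "\<forall>r. x \<le> r \<longrightarrow> r \<le> hi \<longrightarrow> int (\<beta> x) - int x \<le> int (\<beta> r) - int r"
  using assms
proof (induction rule: crit.induct)
  case crit_start then show ?case by auto
next
  case (crit_next x)
  let ?y = "GREATEST y. crit_step_cond \<beta> lo x y"
  have c: "crit_step_cond \<beta> lo x ?y" using greatest_cond(1)[OF crit_next(2)] .
  show ?case
  proof (intro allI impI)
    fix r assume r: "?y \<le> r" "r \<le> hi"
    show "int (\<beta> ?y) - int ?y \<le> int (\<beta> r) - int r"
    proof (cases "x \<le> r")
      case True then show ?thesis using crit_next(3) r c unfolding crit_step_cond_def by force
    next
      case False
      show ?thesis
      proof (cases "r = ?y")
        case True then show ?thesis by simp
      next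
        case False2: False
        have "\<not> crit_step_cond \<beta> lo x r"
          using greatest_cond(2)[OF crit_next(2), of r] r False2 by auto
        then show ?thesis using c r False False2 unfolding crit_step_cond_def by auto
      qed
    qed
  qed
qed

lemma xcrit_props:
  fixes \<beta> lam
  assumes "1 \<le> i" "i \<le> n"
  defines "x \<equiv> xcrit n lam \<beta> i"
  shows "x \<in> crit \<beta> (carrel_lo n lam i) (carrel_hi n lam i) \<and> i \<le> x \<and> x \<le> carrel_hi n lam i
    \<and> (\<forall>r. i \<le> r \<longrightarrow> r \<le> carrel_hi n lam i \<longrightarrow> int (\<beta> x) - int x \<le> int (\<beta> r) - int r)"
proof -
  let ?lo = "carrel_lo n lam i" and ?hi = "carrel_hi n lam i"
  let ?P = "\<lambda>x. x \<in> crit \<beta> ?lo ?hi \<and> i \<le> x"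
  have hi: "i \<le> ?hi" using hi_props[OF assms(1,2)] by simp
  have lo: "?lo < i" using lo_props[OF assms(1)] by simp
  have P0: "?P ?hi" using hi crit.crit_start by blast
  have Px: "?P x" unfolding x_def xcrit_def using LeastI[of ?P, OF P0] .
  have xhi: "x \<le> ?hi" using crit_bounds Px by blast
  have below: "\<forall>r. i \<le> r \<longrightarrow> r < x \<longrightarrow> int (\<beta> x) - int x \<le> int (\<beta> r) - int r"
  proof (intro allI impI)
    fix r assume r: "i \<le> r" "r < x"
    have "\<not> crit_step_cond \<beta> ?lo x r"
    proof
      assume c: "crit_step_cond \<beta> ?lo x r"
      let ?g = "GREATEST y. crit_step_cond \<beta> ?lo x y"
      have "?g \<in> crit \<beta> ?lo ?hi" using crit.crit_next Px c by blast
      moreover have "r \<le> ?g" using greatest_cond(2) c by blast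
      moreover have "?g < x" using greatest_cond(1) c unfolding crit_step_cond_def by blast
      ultimately show False using not_less_Least[of ?g ?P] r unfolding x_def xcrit_def by auto
    qed
    then show "int (\<beta> x) - int x \<le> int (\<beta> r) - int r" using r lo unfolding crit_step_cond_def by auto
  qed
  have above: "\<forall>r. x \<le> r \<longrightarrow> r \<le> ?hi \<longrightarrow> int (\<beta> x) - int x \<le> int (\<beta> r) - int r"
    using crit_min Px by blast
  show ?thesis using Px xhi below above by (meson not_le)
qed

lemma U_bounds: "\<beta> \<in> U_set n \<Longrightarrow> 1 \<le> i \<Longrightarrow> i \<le> n \<Longrightarrow> i \<le> \<beta> i \<and> \<beta> i \<le> n"
  unfolding U_set_def by auto

lemma core_eq:
  fixes \<beta> lam
  assumes "\<beta> \<in> U_set n" "1 \<le> i" "i \<le> n"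
  shows "int (core n lam \<beta> i) - int i = int (\<beta> (xcrit n lam \<beta> i)) - int (xcrit n lam \<beta> i)"
proof -
  let ?x = "xcrit n lam \<beta> i"
  have x: "i \<le> ?x" "?x \<le> carrel_hi n lam i" using xcrit_props[OF assms(2,3)] by auto
  have "?x \<le> n" using x hi_props[OF assms(2,3), where lam=lam] by auto
  hence "?x \<le> \<beta> ?x" using U_bounds[OF assms(1)] x assms by auto
  then show ?thesis unfolding core_def using assms x by auto
qed

lemma core_min:
  fixes \<beta> lam
  assumes "\<beta> \<in> U_set n" "1 \<le> i" "i \<le> n" "i \<le> r" "r \<le> carrel_hi n lam i"
  shows "int (core n lam \<beta> i) - int i \<le> int (\<beta> r) - int r"
  using core_eq[OF assms(1-3)] xcrit_props[OF assms(2,3), where lam=lam and \<beta>=\<beta>] assms(4,5) by auto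

lemma core_mono_carrel:
  fixes \<beta> lam
  assumes "\<beta> \<in> U_set n" "1 \<le> i" "i \<le> n" "i \<le> r" "r \<le> carrel_hi n lam i"
  shows "int (core n lam \<beta> i) - int i \<le> int (core n lam \<beta> r) - int r"
proof -
  have rn: "1 \<le> r" "r \<le> n" using assms hi_props[OF assms(2,3), where lam=lam] by auto
  have sc: "carrel_hi n lam r = carrel_hi n lam i" using same_carrel[OF assms(2-5)] by simp
  have xr: "r \<le> xcrit n lam \<beta> r" "xcrit n lam \<beta> r \<le> carrel_hi n lam i"
    using xcrit_props[OF rn, where lam=lam and \<beta>=\<beta>] sc by auto
  have "int (core n lam \<beta> i) - int i \<le> int (\<beta> (xcrit n lam \<beta> r)) - int (xcrit n lam \<beta> r)"
    using core_min[OF assms(1-3)] xr assms(4) by auto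
  then show ?thesis using core_eq[OF assms(1) rn] by simp
qed

lemma core_bounds:
  fixes \<beta> lam
  assumes "\<beta> \<in> U_set n" "1 \<le> i" "i \<le> n"
  shows "i \<le> core n lam \<beta> i \<and> core n lam \<beta> i \<le> n"
proof -
  let ?x = "xcrit n lam \<beta> i"
  have x: "i \<le> ?x" "?x \<le> carrel_hi n lam i" using xcrit_props[OF assms(2,3)] by auto
  have "?x \<le> n" using x hi_props[OF assms(2,3), where lam=lam] by auto
  hence "?x \<le> \<beta> ?x" "\<beta> ?x \<le> n" using U_bounds[OF assms(1)] x assms by auto
  then show ?thesis using core_eq[OF assms, where lam=lam] x by auto
qed

lemma core_U:
  assumes "\<beta> \<in> U_set n"
  shows "core n lam \<beta> \<in> U_set n"
  using core_bounds[OF assms] unfolding U_set_def core_def[symmetric]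
  by (auto simp: core_def)

lemma core_R:
  assumes "\<beta> \<in> U_set n" "q \<in> Rset n lam"
  shows "core n lam \<beta> q = \<beta> q"
proof -
  have q: "1 \<le> q" "q \<le> n" using Rset_bounds[OF assms(2)] by auto
  have "xcrit n lam \<beta> q = q" using xcrit_props[OF q, where lam=lam and \<beta>=\<beta>] hi_of_R[OF assms(2)] by auto
  then show ?thesis using core_eq[OF assms(1) q, where lam=lam] by simp
qed

lemma core_strict:
  assumes "\<beta> \<in> U_set n" "1 \<le> i" "i < n" "i \<notin> Rset n lam"
  shows "core n lam \<beta> i < core n lam \<beta> (i+1)"
proof -
  have hi: "i \<le> carrel_hi n lam i" "carrel_hi n lam i < n \<longrightarrow> carrel_hi n lam i \<in> Rset n lam"
    using hi_props[of i n lam] assms by auto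
  have "i + 1 \<le> carrel_hi n lam i"
  proof (rule ccontr)
    assume "\<not> i + 1 \<le> carrel_hi n lam i"
    hence "carrel_hi n lam i = i" using hi by auto
    thus False using hi assms by auto
  qed
  from core_mono_carrel[OF assms(1,2) _ _ this] assms show ?thesis by auto
qed

lemma hi_zero_row:
  assumes "is_partition n lam" "1 \<le> s" "s \<le> n" "lam s = 0"
  shows "carrel_hi n lam s = n"
proof (rule ccontr)
  assume a: "carrel_hi n lam s \<noteq> n"
  let ?h = "carrel_hi n lam s"
  have h: "s \<le> ?h" "?h \<le> n" "?h < n \<longrightarrow> ?h \<in> Rset n lam" using hi_props[OF assms(2,3)] by auto
  hence R: "?h \<in> Rset n lam" using a by auto
  have "lam ?h = lam s" using lam_const[OF assms(1-3) h(1)] by simp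
  thus False using Rset_bounds[OF R] assms by auto
qed

lemma core_zero_row:
  assumes "is_partition n lam" "\<beta> \<in> U_set n" "1 \<le> s" "s \<le> n" "lam s = 0"
  shows "core n lam \<beta> s = s"
proof -
  have h: "carrel_hi n lam s = n" using hi_zero_row[OF assms(1,3,4,5)] .
  have "int (core n lam \<beta> s) - int s \<le> int (\<beta> n) - int n"
    using core_min[OF assms(2,3,4), of n lam] h assms by auto
  moreover have "\<beta> n \<le> n" using U_bounds[OF assms(2), of n] assms by auto
  ultimately show ?thesis using core_bounds[OF assms(2,3,4), of lam] by auto
qed

lemma core_UBP:
  assumes "\<beta> \<in> U_set n"
  shows "core n lam \<beta> \<in> UBP n lam"
proof -
  let ?d = "core n lam \<beta>"
  have dU: "?d \<in> U_set n" using core_U[OF assms] .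
  have "\<forall>i\<in>{1..n}. ?d i \<le> platform n lam ?d i"
  proof
    fix i assume i: "i \<in> {1..n}"
    let ?x = "xcrit n lam ?d i"
    have x: "i \<le> ?x" "?x \<le> carrel_hi n lam i" using xcrit_props[of i n] i by auto
    have "int (?d i) - int i \<le> int (?d ?x) - int ?x"
      using core_mono_carrel[OF assms _ _ x] i by auto
    then show "?d i \<le> platform n lam ?d i" unfolding platform_def using i x by auto
  qed
  then show ?thesis using dU unfolding UBP_def by auto
qed

lemma finite_crit: "finite (crit b lo hi)"
  by (rule finite_subset[of _ "{..hi}"]) (auto dest: crit_bounds)

lemma core_flag:
  assumes "is_partition n lam" "\<beta> \<in> UGC n lam"
  shows "flag_crit n lam (core n lam \<beta>)"
  unfolding flag_crit_def
proof
  fix q assume qR: "q \<in> Rset n lam"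
  have bU: "\<beta> \<in> U_set n" and fl: "flag_crit n lam \<beta>" using assms(2) unfolding UGC_def by auto
  let ?d = "core n lam \<beta>"
  let ?h = "carrel_hi n lam (q+1)"
  let ?x = "xcrit n lam \<beta> (q+1)"
  have q: "1 \<le> q" "q+1 \<le> n" using Rset_bounds[OF qR] by auto
  have q1: "1 \<le> q+1" by simp
  have lo: "carrel_lo n lam (q+1) = q" using lo_of_R[OF qR] .
  have hq: "q + 1 \<le> ?h" "?h \<le> n" using hi_props[OF q1 q(2), where lam=lam] by auto
  have xp: "?x \<in> crit \<beta> q ?h" "q+1 \<le> ?x" "?x \<le> ?h"
    using xcrit_props[OF q1 q(2), where lam=lam and \<beta>=\<beta>] lo by auto
  have critgt: "\<And>y. y \<in> crit \<beta> q ?h \<Longrightarrow> q < y" using crit_bounds hq by fastforce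
  have least: "\<And>y. y \<in> crit \<beta> q ?h \<Longrightarrow> ?x \<le> y"
  proof -
    fix y assume y: "y \<in> crit \<beta> q ?h"
    hence "y \<in> crit \<beta> (carrel_lo n lam (q+1)) (carrel_hi n lam (q+1)) \<and> q+1 \<le> y"
      using critgt lo by fastforce
    then show "?x \<le> y" unfolding xcrit_def by (rule Least_le)
  qed
  have finc: "\<And>b lo hi. finite (crit b lo hi)" using finite_crit by blast
  have minb: "Min (crit \<beta> q ?h) = ?x"
    using xp(1) least finc by (intro Min_eqI) auto
  have flb: "\<beta> q \<le> \<beta> ?x" using fl qR minb unfolding flag_crit_def by auto
  have xr: "\<And>r. q+1 \<le> r \<Longrightarrow> r \<le> ?x \<Longrightarrow> xcrit n lam \<beta> r = ?x"
  proof -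
    fix r assume r: "q+1 \<le> r" "r \<le> ?x"
    have sc: "carrel_hi n lam r = ?h \<and> carrel_lo n lam r = q"
      using same_carrel[OF q1 q(2) r(1)] r xp lo by auto
    have "xcrit n lam \<beta> r = (LEAST y. y \<in> crit \<beta> q ?h \<and> r \<le> y)"
      unfolding xcrit_def using sc by simp
    also have "\<dots> = ?x"
    proof (rule Least_equality)
      show "?x \<in> crit \<beta> q ?h \<and> r \<le> ?x" using xp r by auto
      show "\<And>y. y \<in> crit \<beta> q ?h \<and> r \<le> y \<Longrightarrow> ?x \<le> y" using least by blast
    qed
    finally show "xcrit n lam \<beta> r = ?x" .
  qed
  have dr: "\<And>r. q+1 \<le> r \<Longrightarrow> r \<le> ?x \<Longrightarrow> int (?d r) - int r = int (\<beta> ?x) - int ?x"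
  proof -
    fix r assume r: "q+1 \<le> r" "r \<le> ?x"
    have "1 \<le> r" "r \<le> n" using r xp hq by auto
    then show "int (?d r) - int r = int (\<beta> ?x) - int ?x" using core_eq[OF bU, of r lam] xr[OF r] by simp
  qed
  have dU: "?d \<in> U_set n" using core_U[OF bU] .
  have critd: "\<And>z. z \<in> crit ?d q ?h \<Longrightarrow> ?x \<le> z"
  proof -
    fix z assume "z \<in> crit ?d q ?h"
    then show "?x \<le> z"
    proof (induction rule: crit.induct)
      case crit_start then show ?case using xp by simp
    next
      case (crit_next z)
      let ?g = "GREATEST y. crit_step_cond ?d q z y"
      have c: "crit_step_cond ?d q z ?g" using greatest_cond(1)[OF crit_next(2)] .
      show ?case
      proof (rule ccontr)
        assume "\<not> ?x \<le> ?g"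
        hence gx: "?g < ?x" by simp
        have gq: "q < ?g" "?g < z" "int (?d z) - int (?d ?g) > int z - int ?g"
          using c unfolding crit_step_cond_def by auto
        have dg: "int (?d ?g) - int ?g = int (\<beta> ?x) - int ?x" using dr gq gx by simp
        have dx: "int (?d ?x) - int ?x = int (\<beta> ?x) - int ?x" using dr xp by simp
        show False
        proof (cases "z = ?x")
          case True then show False using gq dg dx by simp
        next
          case False
          hence zx: "?x < z" using crit_next(3) by simp
          have "crit_step_cond ?d q z ?x" unfolding crit_step_cond_def
            using zx xp gq dg dx by auto
          hence "?x \<le> ?g" using greatest_cond(2) by blast
          then show False using gx by simp
        qed
      qed
    qed
  qed
  let ?m = "Min (crit ?d q ?h)"
  have m: "?m \<in> crit ?d q ?h" using finc by (intro Min_in) (auto intro: crit.crit_start)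
  have mx: "?x \<le> ?m" using critd m by blast
  have mh: "?m \<le> ?h" using crit_bounds m by blast
  have xn: "1 \<le> ?x" "?x \<le> n" using xp hq by auto
  have hx: "carrel_hi n lam ?x = ?h" using same_carrel[OF q1 q(2) xp(2) xp(3)] by simp
  have "int (?d ?x) - int ?x \<le> int (?d ?m) - int ?m"
    using core_mono_carrel[OF bU xn mx] mh hx by simp
  hence "?d ?x \<le> ?d ?m" using mx by simp
  moreover have "?d ?x = \<beta> ?x" using dr[of ?x] xp by simp
  moreover have "?d q = \<beta> q" using core_R[OF bU qR] .
  ultimately show "?d q \<le> ?d ?m" using flb by simp
qed

lemma core_gapless:
  assumes "is_partition n lam" "\<beta> \<in> UGC n lam"
  shows "gapless n lam (core n lam \<beta>)"
proof -
  have bU: "\<beta> \<in> U_set n" using assms(2) unfolding UGC_def by auto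
  show ?thesis unfolding gapless_def UGC_def
    using core_U[OF bU] core_flag[OF assms] core_strict[OF bU] by auto
qed

definition Mx :: "nat \<Rightarrow> (nat \<Rightarrow> nat) \<Rightarrow> (nat \<Rightarrow> nat) \<Rightarrow> nat \<Rightarrow> nat \<Rightarrow> nat" where
  "Mx n lam \<beta> i j = Min ((\<lambda>r. \<beta> r + i - r) ` {r. i \<le> r \<and> r \<le> n \<and> j \<le> lam r})"

definition Mtab :: "nat \<Rightarrow> (nat \<Rightarrow> nat) \<Rightarrow> (nat \<Rightarrow> nat) \<Rightarrow> nat \<Rightarrow> nat \<Rightarrow> nat \<Rightarrow> nat" where
  "Mtab n lam \<beta> s = (\<lambda>i j. if (i,j) \<in> diagram n lam then (if i < s then i else Mx n lam \<beta> i j) else 0)"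

lemma diagram_iff: "(i,j) \<in> diagram n lam \<longleftrightarrow> 1 \<le> i \<and> i \<le> n \<and> 1 \<le> j \<and> j \<le> lam i"
  unfolding diagram_def by auto

lemma finite_diagram: "finite (diagram n lam)"
proof -
  have "diagram n lam = Sigma {1..n} (\<lambda>i. {1..lam i})" unfolding diagram_def by auto
  then show ?thesis by simp
qed

lemma Mx_le:
  assumes "(i,j) \<in> diagram n lam" "i \<le> r" "r \<le> n" "j \<le> lam r"
  shows "Mx n lam \<beta> i j \<le> \<beta> r + i - r"
  unfolding Mx_def using assms by (intro Min_le) auto

lemma Mx_ex:
  assumes "(i,j) \<in> diagram n lam"
  shows "\<exists>r. i \<le> r \<and> r \<le> n \<and> j \<le> lam r \<and> Mx n lam \<beta> i j = \<beta> r + i - r"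
proof -
  have "Mx n lam \<beta> i j \<in> (\<lambda>r. \<beta> r + i - r) ` {r. i \<le> r \<and> r \<le> n \<and> j \<le> lam r}"
    unfolding Mx_def using assms by (intro Min_in) (auto simp: diagram_iff)
  then show ?thesis by auto
qed

lemma Mx_ge:
  assumes "\<beta> \<in> U_set n" "(i,j) \<in> diagram n lam"
  shows "i \<le> Mx n lam \<beta> i j \<and> Mx n lam \<beta> i j \<le> \<beta> i"
proof -
  obtain r where r: "i \<le> r" "r \<le> n" "j \<le> lam r" "Mx n lam \<beta> i j = \<beta> r + i - r"
    using Mx_ex[OF assms(2)] by blast
  have "r \<le> \<beta> r" using U_bounds[OF assms(1), of r] r assms(2) by (auto simp: diagram_iff)
  moreover have "Mx n lam \<beta> i j \<le> \<beta> i + i - i" using Mx_le[OF assms(2), of i \<beta>] assms(2) by (auto simp: diagram_iff)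
  ultimately show ?thesis using r by auto
qed

lemma col_chain:
  assumes "is_partition n lam" "flagged_ssyt n lam \<beta> T" "(i,j) \<in> diagram n lam" "i \<le> r" "(r,j) \<in> diagram n lam"
  shows "T i j + r \<le> T r j + i"
  using assms(4,5)
proof (induction r rule: dec_induct)
  case base then show ?case by simp
next
  case (step k)
  have k: "1 \<le> k" "Suc k \<le> n" "j \<le> lam (Suc k)" "1 \<le> j"
    using step assms(3) by (auto simp: diagram_iff)
  have "lam (Suc k) \<le> lam k" using assms(1) k unfolding is_partition_def by simp
  hence "(k,j) \<in> diagram n lam" using k by (simp add: diagram_iff)
  then have "T i j + k \<le> T k j + i" using step by blast
  moreover have "T k j < T (Suc k) j" using assms(2) \<open>(k,j) \<in> diagram n lam\<close> step(4)
    unfolding flagged_ssyt_def by auto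
  ultimately show ?case by simp
qed

lemma T_le_Mx:
  assumes "is_partition n lam" "flagged_ssyt n lam \<beta> T" "(i,j) \<in> diagram n lam"
  shows "T i j \<le> Mx n lam \<beta> i j"
proof -
  obtain r where r: "i \<le> r" "r \<le> n" "j \<le> lam r" "Mx n lam \<beta> i j = \<beta> r + i - r"
    using Mx_ex[OF assms(3)] by blast
  have rD: "(r,j) \<in> diagram n lam" using r assms(3) by (auto simp: diagram_iff)
  have "T i j + r \<le> T r j + i" using col_chain[OF assms r(1) rD] .
  moreover have "T r j \<le> \<beta> r" using assms(2) rD unfolding flagged_ssyt_def by auto
  ultimately show ?thesis using r by auto
qed

lemma T_ge_row:
  assumes "is_partition n lam" "flagged_ssyt n lam \<beta> T" "(i,j) \<in> diagram n lam"
  shows "i \<le> T i j"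
proof -
  have ij: "1 \<le> i" "i \<le> n" "1 \<le> j" "j \<le> lam i" using assms(3) by (auto simp: diagram_iff)
  have "lam i \<le> lam 1" using assms(1) ij unfolding is_partition_def by simp
  hence D1: "(1,j) \<in> diagram n lam" using ij by (simp add: diagram_iff)
  have "T 1 j + i \<le> T i j + 1" using col_chain[OF assms(1,2) D1 _ assms(3)] assms(3) by (auto simp: diagram_iff)
  moreover have "1 \<le> T 1 j" using assms(2) D1 unfolding flagged_ssyt_def by auto
  ultimately show ?thesis by simp
qed

lemma Mtab_flagged:
  assumes "is_partition n lam" "\<beta> \<in> U_set n"
  shows "flagged_ssyt n lam \<beta> (Mtab n lam \<beta> s)"
  unfolding flagged_ssyt_def
proof (intro conjI allI impI ballI)
  fix c assume c: "c \<in> diagram n lam"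
  obtain i j where ij: "c = (i,j)" by (cases c)
  have D: "(i,j) \<in> diagram n lam" using c ij by simp
  have b: "i \<le> Mx n lam \<beta> i j" "Mx n lam \<beta> i j \<le> \<beta> i" using Mx_ge[OF assms(2) D] by auto
  have bi: "i \<le> \<beta> i" "\<beta> i \<le> n" using U_bounds[OF assms(2), of i] D by (auto simp: diagram_iff)
  show "case c of (i, j) \<Rightarrow> 1 \<le> Mtab n lam \<beta> s i j \<and> Mtab n lam \<beta> s i j \<le> n \<and> Mtab n lam \<beta> s i j \<le> \<beta> i"
    using ij D b bi unfolding Mtab_def by (auto simp: diagram_iff)
next
  fix i j assume "(i,j) \<notin> diagram n lam"
  then show "Mtab n lam \<beta> s i j = 0" unfolding Mtab_def by simp
next
  fix i j assume D: "(i,j) \<in> diagram n lam" and D': "(i,j+1) \<in> diagram n lam"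
  have "Mx n lam \<beta> i j \<le> Mx n lam \<beta> i (j+1)"
  proof -
    obtain r where r: "i \<le> r" "r \<le> n" "j+1 \<le> lam r" "Mx n lam \<beta> i (j+1) = \<beta> r + i - r"
      using Mx_ex[OF D'] by blast
    show ?thesis using Mx_le[OF D r(1,2)] r by auto
  qed
  then show "Mtab n lam \<beta> s i j \<le> Mtab n lam \<beta> s i (j+1)" using D D' unfolding Mtab_def by auto
next
  fix i j assume D: "(i,j) \<in> diagram n lam" and D': "(i+1,j) \<in> diagram n lam"
  have b: "i+1 \<le> Mx n lam \<beta> (i+1) j" using Mx_ge[OF assms(2) D'] by auto
  have "Mx n lam \<beta> i j < Mx n lam \<beta> (i+1) j"
  proof -
    obtain r where r: "i+1 \<le> r" "r \<le> n" "j \<le> lam r" "Mx n lam \<beta> (i+1) j = \<beta> r + (i+1) - r"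
      using Mx_ex[OF D'] by blast
    have "r \<le> \<beta> r" using U_bounds[OF assms(2), of r] r D by (auto simp: diagram_iff)
    moreover have "Mx n lam \<beta> i j \<le> \<beta> r + i - r" using Mx_le[OF D, of r \<beta>] r by auto
    ultimately show ?thesis using r by auto
  qed
  then show "Mtab n lam \<beta> s i j < Mtab n lam \<beta> s (i+1) j" using D D' b unfolding Mtab_def by auto
qed

definition fixed_rows :: "nat \<Rightarrow> (nat \<Rightarrow> nat) \<Rightarrow> (nat \<Rightarrow> nat \<Rightarrow> nat) \<Rightarrow> nat \<Rightarrow> bool" where
  "fixed_rows n lam T s \<longleftrightarrow> (\<forall>i j. (i,j) \<in> diagram n lam \<longrightarrow> i < s \<longrightarrow> T i j = i)"

lemma row_set: "1 \<le> k \<Longrightarrow> k \<le> n \<Longrightarrow> {(i,j) \<in> diagram n lam. i = k} = {k} \<times> {1..lam k}"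
  unfolding diagram_def by auto

lemma content_fixed:
  assumes "is_partition n lam" "flagged_ssyt n lam \<beta> T" "fixed_rows n lam T s" "1 \<le> k" "k < s" "k \<le> n"
  shows "content n lam T k = lam k"
proof -
  have "{(i,j) \<in> diagram n lam. T i j = k} = {(i,j) \<in> diagram n lam. i = k}"
  proof (intro set_eqI iffI)
    fix c assume c: "c \<in> {(i,j) \<in> diagram n lam. T i j = k}"
    obtain i j where ij: "c = (i,j)" by (cases c)
    have D: "(i,j) \<in> diagram n lam" "T i j = k" using c ij by auto
    have "i \<le> k" using T_ge_row[OF assms(1,2) D(1)] D by simp
    hence "T i j = i" using assms(3,5) D unfolding fixed_rows_def by auto
    then show "c \<in> {(i,j) \<in> diagram n lam. i = k}" using D ij by auto
  next
    fix c assume c: "c \<in> {(i,j) \<in> diagram n lam. i = k}"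
    then show "c \<in> {(i,j) \<in> diagram n lam. T i j = k}" using assms(3,5) unfolding fixed_rows_def by auto
  qed
  then show ?thesis unfolding content_def using row_set[OF assms(4,6), of lam] by simp
qed

lemma fixed_of_content:
  assumes "is_partition n lam" "flagged_ssyt n lam \<beta> T"
    "\<forall>k. 1 \<le> k \<longrightarrow> k < s \<longrightarrow> k \<le> n \<longrightarrow> content n lam T k = lam k"
  shows "fixed_rows n lam T s"
proof -
  have "\<forall>j. (i,j) \<in> diagram n lam \<longrightarrow> i < s \<longrightarrow> T i j = i" for i
  proof (induction i rule: less_induct)
    case (less i)
    show ?case
    proof (intro allI impI)
      fix j assume D: "(i,j) \<in> diagram n lam" and iis: "i < s"
      have i: "1 \<le> i" "i \<le> n" using D by (auto simp: diagram_iff)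
      let ?A = "{(r,j') \<in> diagram n lam. T r j' = i}"
      let ?B = "{i} \<times> {1..lam i}"
      have sub: "?A \<subseteq> ?B"
      proof
        fix c assume c: "c \<in> ?A"
        obtain r j' where rj: "c = (r,j')" by (cases c)
        have D': "(r,j') \<in> diagram n lam" "T r j' = i" using c rj by auto
        have "r \<le> i" using T_ge_row[OF assms(1,2) D'(1)] D' by simp
        moreover have "\<not> r < i"
        proof
          assume "r < i"
          hence "T r j' = r" using less.IH D'(1) iis by auto
          thus False using D' \<open>r < i\<close> by simp
        qed
        ultimately show "c \<in> ?B" using D' rj by (auto simp: diagram_iff)
      qed
      have "card ?A = lam i" using assms(3) i iis unfolding content_def by auto
      hence "card ?A = card ?B" by simp
      hence "?A = ?B" using card_subset_eq[OF _ sub] by simp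
      moreover have "(i,j) \<in> ?B" using D by (auto simp: diagram_iff)
      ultimately have "(i,j) \<in> ?A" by simp
      then show "T i j = i" by simp
    qed
  qed
  then show ?thesis unfolding fixed_rows_def by blast
qed

definition tsum :: "nat \<Rightarrow> (nat \<Rightarrow> nat) \<Rightarrow> (nat \<Rightarrow> nat \<Rightarrow> nat) \<Rightarrow> nat" where
  "tsum n lam T = (\<Sum>(i,j)\<in>diagram n lam. T i j)"

lemma tsum_content:
  assumes "flagged_ssyt n lam \<beta> T"
  shows "tsum n lam T = (\<Sum>k\<le>n. k * content n lam T k)"
proof -
  let ?D = "diagram n lam"
  have le: "\<And>c. c \<in> ?D \<Longrightarrow> case_prod T c \<le> n" using assms unfolding flagged_ssyt_def by auto
  have "tsum n lam T = (\<Sum>c\<in>?D. \<Sum>k\<le>n. if case_prod T c = k then k else 0)"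
    unfolding tsum_def by (rule sum.cong) (auto dest: le)
  also have "\<dots> = (\<Sum>k\<le>n. \<Sum>c\<in>?D. if case_prod T c = k then k else 0)" by (rule sum.swap)
  also have "\<dots> = (\<Sum>k\<le>n. k * content n lam T k)"
  proof (rule sum.cong)
    fix k
    have "(\<Sum>c\<in>?D. if case_prod T c = k then k else 0) = (\<Sum>c\<in>{c\<in>?D. case_prod T c = k}. k)"
      using finite_diagram by (simp add: sum.If_cases Int_def)
    also have "\<dots> = k * card {c\<in>?D. case_prod T c = k}" by simp
    also have "{c\<in>?D. case_prod T c = k} = {(i,j)\<in>?D. T i j = k}" by auto
    finally show "(\<Sum>c\<in>?D. if case_prod T c = k then k else 0) = k * content n lam T k"
      unfolding content_def .
  qed simp
  finally show ?thesis .
qed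

lemma finite_tabs: "finite {T. flagged_ssyt n lam \<beta> T \<and> P T}"
proof -
  let ?D = "diagram n lam"
  let ?F = "{f :: nat \<times> nat \<Rightarrow> nat. \<forall>x. (x \<in> ?D \<longrightarrow> f x \<in> {..n}) \<and> (x \<notin> ?D \<longrightarrow> f x = 0)}"
  have fF: "finite ?F" by (rule finite_set_of_finite_funs) (auto simp: finite_diagram)
  have "{T. flagged_ssyt n lam \<beta> T \<and> P T} \<subseteq> curry ` ?F"
  proof
    fix T assume "T \<in> {T. flagged_ssyt n lam \<beta> T \<and> P T}"
    hence fl: "flagged_ssyt n lam \<beta> T" by simp
    have "case_prod T \<in> ?F" using fl unfolding flagged_ssyt_def by auto
    moreover have "T = curry (case_prod T)" by simp
    ultimately show "T \<in> curry ` ?F" by blast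
  qed
  then show ?thesis using finite_subset fF by blast
qed

lemma schur_pos:
  assumes "flagged_ssyt n lam \<beta> T"
  shows "0 < schur_coeff n lam \<beta> (content n lam T)"
  unfolding schur_coeff_def using assms finite_tabs[of n lam \<beta> "\<lambda>T'. content n lam T' = content n lam T"]
  by (subst card_gt_0_iff) auto

lemma schur_ex:
  assumes "0 < schur_coeff n lam \<beta> \<theta>"
  shows "\<exists>T. flagged_ssyt n lam \<beta> T \<and> content n lam T = \<theta>"
  using assms unfolding schur_coeff_def by (metis (mono_tags, lifting) card.empty empty_Collect_eq less_irrefl)

lemma content_cong:
  assumes "\<forall>i j. (i,j) \<in> diagram n lam \<longrightarrow> T i j = T' i j"
  shows "content n lam T = content n lam T'"
  unfolding content_def
proof
  fix k
  have "{(i, j) \<in> diagram n lam. T i j = k} = {(i, j) \<in> diagram n lam. T' i j = k}" using assms by auto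
  then show "card {(i, j) \<in> diagram n lam. T i j = k} = card {(i, j) \<in> diagram n lam. T' i j = k}" by simp
qed

lemma Mtab_sum_le:
  assumes "is_partition n lam" "\<beta>1 \<in> U_set n" "\<beta>2 \<in> U_set n"
    "schur_coeff n lam \<beta>1 = schur_coeff n lam \<beta>2"
  shows "tsum n lam (Mtab n lam \<beta>1 s) \<le> tsum n lam (Mtab n lam \<beta>2 s) \<and>
    (tsum n lam (Mtab n lam \<beta>1 s) = tsum n lam (Mtab n lam \<beta>2 s) \<longrightarrow>
      content n lam (Mtab n lam \<beta>1 s) = content n lam (Mtab n lam \<beta>2 s))"
proof -
  let ?D = "diagram n lam"
  let ?M1 = "Mtab n lam \<beta>1 s" and ?M2 = "Mtab n lam \<beta>2 s"
  let ?\<theta> = "content n lam ?M1"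
  have f1: "flagged_ssyt n lam \<beta>1 ?M1" using Mtab_flagged[OF assms(1,2)] .
  have f2: "flagged_ssyt n lam \<beta>2 ?M2" using Mtab_flagged[OF assms(1,3)] .
  have "0 < schur_coeff n lam \<beta>2 ?\<theta>" using schur_pos[OF f1] assms(4) by simp
  then obtain T where T: "flagged_ssyt n lam \<beta>2 T" "content n lam T = ?\<theta>" using schur_ex by blast
  have fx1: "fixed_rows n lam ?M1 s" unfolding fixed_rows_def Mtab_def by auto
  have "\<forall>k. 1 \<le> k \<longrightarrow> k < s \<longrightarrow> k \<le> n \<longrightarrow> content n lam T k = lam k"
    using content_fixed[OF assms(1) f1 fx1] T(2) by simp
  hence fxT: "fixed_rows n lam T s" using fixed_of_content[OF assms(1) T(1)] by simp
  have pw: "\<forall>c\<in>?D. case_prod T c \<le> case_prod ?M2 c"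
  proof
    fix c assume c: "c \<in> ?D"
    obtain i j where ij: "c = (i,j)" by (cases c)
    have D: "(i,j) \<in> ?D" using c ij by simp
    show "case_prod T c \<le> case_prod ?M2 c"
      using fxT D T_le_Mx[OF assms(1) T(1) D] ij unfolding fixed_rows_def Mtab_def by auto
  qed
  have eqs: "tsum n lam T = tsum n lam ?M1" using tsum_content[OF T(1)] tsum_content[OF f1] T(2) by simp
  have le: "tsum n lam T \<le> tsum n lam ?M2" unfolding tsum_def
    using sum_mono[of ?D "case_prod T" "case_prod ?M2"] pw by blast
  have "tsum n lam ?M1 = tsum n lam ?M2 \<longrightarrow> ?\<theta> = content n lam ?M2"
  proof
    assume e: "tsum n lam ?M1 = tsum n lam ?M2"
    have "\<forall>c\<in>?D. case_prod T c = case_prod ?M2 c"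
    proof (rule ccontr)
      assume "\<not> (\<forall>c\<in>?D. case_prod T c = case_prod ?M2 c)"
      then obtain c where c: "c \<in> ?D" "case_prod T c \<noteq> case_prod ?M2 c" by blast
      hence "case_prod T c < case_prod ?M2 c" using pw by (meson le_neq_implies_less)
      hence "sum (case_prod T) ?D < sum (case_prod ?M2) ?D"
        using pw c(1) finite_diagram by (intro sum_strict_mono_ex1) blast+
      thus False using e eqs unfolding tsum_def by simp
    qed
    hence "content n lam T = content n lam ?M2" by (intro content_cong) auto
    then show "?\<theta> = content n lam ?M2" using T(2) by simp
  qed
  then show ?thesis using le eqs by simp
qed

lemma Mtab_content_eq:
  assumes "is_partition n lam" "\<beta>1 \<in> U_set n" "\<beta>2 \<in> U_set n"
    "schur_coeff n lam \<beta>1 = schur_coeff n lam \<beta>2"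
  shows "content n lam (Mtab n lam \<beta>1 s) = content n lam (Mtab n lam \<beta>2 s)"
  using Mtab_sum_le[OF assms, of s] Mtab_sum_le[OF assms(1,3,2) assms(4)[symmetric], of s] by simp

lemma content_Mtab_high:
  assumes "s \<le> k"
  shows "content n lam (Mtab n lam \<beta> s) k = card {(i,j) \<in> diagram n lam. s \<le> i \<and> Mx n lam \<beta> i j = k}"
proof -
  have "{(i,j) \<in> diagram n lam. Mtab n lam \<beta> s i j = k} = {(i,j) \<in> diagram n lam. s \<le> i \<and> Mx n lam \<beta> i j = k}"
    using assms unfolding Mtab_def by auto
  then show ?thesis unfolding content_def by simp
qed

lemma extract_row:
  assumes "is_partition n lam" "\<beta>1 \<in> U_set n" "\<beta>2 \<in> U_set n"
    "schur_coeff n lam \<beta>1 = schur_coeff n lam \<beta>2"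
    "(s,j0) \<in> diagram n lam" "Mx n lam \<beta>2 s j0 = k" "s < k"
  shows "\<exists>j. (s,j) \<in> diagram n lam \<and> Mx n lam \<beta>1 s j = k"
proof -
  let ?D = "diagram n lam"
  define A where "A \<beta> = {(i,j) \<in> ?D. s \<le> i \<and> Mx n lam \<beta> i j = k}" for \<beta>
  define Rw where "Rw \<beta> = {(i,j) \<in> ?D. i = s \<and> Mx n lam \<beta> i j = k}" for \<beta>
  define B where "B \<beta> = {(i,j) \<in> ?D. s+1 \<le> i \<and> Mx n lam \<beta> i j = k}" for \<beta>
  have split: "card (A \<beta>) = card (Rw \<beta>) + card (B \<beta>)" for \<beta>
  proof -
    have "A \<beta> = Rw \<beta> \<union> B \<beta>" unfolding A_def Rw_def B_def by auto
    moreover have "Rw \<beta> \<inter> B \<beta> = {}" unfolding Rw_def B_def by auto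
    moreover have "finite (Rw \<beta>)" "finite (B \<beta>)" unfolding Rw_def B_def
      by (auto intro: finite_subset[OF _ finite_diagram])
    ultimately show ?thesis by (simp add: card_Un_disjoint)
  qed
  have cA': "card (A \<beta>) = content n lam (Mtab n lam \<beta> s) k" for \<beta>
    unfolding A_def using content_Mtab_high[of s k n lam \<beta>] assms(7) by simp
  have cB': "card (B \<beta>) = content n lam (Mtab n lam \<beta> (s+1)) k" for \<beta>
    unfolding B_def using content_Mtab_high[of "s+1" k n lam \<beta>] assms(7) by simp
  have cA: "card (A \<beta>1) = card (A \<beta>2)"
    unfolding cA' using Mtab_content_eq[OF assms(1-4), of s] by simp
  have cB: "card (B \<beta>1) = card (B \<beta>2)"
    unfolding cB' using Mtab_content_eq[OF assms(1-4), of "s+1"] by simp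
  have "card (Rw \<beta>1) = card (Rw \<beta>2)" using split[of \<beta>1] split[of \<beta>2] cA cB by simp
  moreover have "(s,j0) \<in> Rw \<beta>2" unfolding Rw_def using assms(5,6) by simp
  moreover have "finite (Rw \<beta>2)" unfolding Rw_def by (auto intro: finite_subset[OF _ finite_diagram])
  ultimately have "card (Rw \<beta>1) \<noteq> 0" by (metis card_0_eq empty_iff)
  hence "Rw \<beta>1 \<noteq> {}" by auto
  then show ?thesis unfolding Rw_def by auto
qed

lemma finite_ms:
  assumes "finite A"
  shows "finite {M :: nat multiset. size M = m \<and> set_mset M \<subseteq> A}"
proof -
  have "{M :: nat multiset. size M = m \<and> set_mset M \<subseteq> A} \<subseteq> mset ` {xs. set xs \<subseteq> A \<and> length xs = m}"
  proof
    fix M :: "nat multiset" assume M: "M \<in> {M. size M = m \<and> set_mset M \<subseteq> A}"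
    obtain xs where xs: "mset xs = M" using ex_mset by blast
    have "set xs = set_mset M" "length xs = size M" using xs by auto
    hence xin: "xs \<in> {xs. set xs \<subseteq> A \<and> length xs = m}" using M by simp
    show "M \<in> mset ` {xs. set xs \<subseteq> A \<and> length xs = m}" using rev_image_eqI[of xs _ M mset, OF xin xs[symmetric]] .
  qed
  then show ?thesis by (rule finite_subset) (intro finite_imageI finite_lists_length_eq assms)
qed

lemma nm_eq: "num_monomials (h_coeff u i k) = card {M. 0 \<le> u \<and> size M = nat u \<and> set_mset M \<subseteq> {i..k}}"
  unfolding num_monomials_def h_coeff_def by (intro arg_cong[where f=card]) auto

lemma nm_mono:
  assumes "k \<le> k'"
  shows "num_monomials (h_coeff u i k) \<le> num_monomials (h_coeff u i k')"
  unfolding nm_eq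
proof (rule card_mono)
  show "finite {M. 0 \<le> u \<and> size M = nat u \<and> set_mset M \<subseteq> {i..k'}}"
  proof -
    have "{M. 0 \<le> u \<and> size M = nat u \<and> set_mset M \<subseteq> {i..k'}} \<subseteq> {M. size M = nat u \<and> set_mset M \<subseteq> {i..k'}}" by auto
    then show ?thesis using finite_ms[of "{i..k'}" "nat u"] by (rule finite_subset) simp
  qed
  show "{M. 0 \<le> u \<and> size M = nat u \<and> set_mset M \<subseteq> {i..k}} \<subseteq> {M. 0 \<le> u \<and> size M = nat u \<and> set_mset M \<subseteq> {i..k'}}"
    using assms by auto
qed

lemma nm_strict:
  assumes "k < k'" "1 \<le> u" "i \<le> k'"
  shows "num_monomials (h_coeff u i k) < num_monomials (h_coeff u i k')"
  unfolding nm_eq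
proof (rule psubset_card_mono)
  show "finite {M. 0 \<le> u \<and> size M = nat u \<and> set_mset M \<subseteq> {i..k'}}"
  proof -
    have "{M. 0 \<le> u \<and> size M = nat u \<and> set_mset M \<subseteq> {i..k'}} \<subseteq> {M. size M = nat u \<and> set_mset M \<subseteq> {i..k'}}" by auto
    then show ?thesis using finite_ms[of "{i..k'}" "nat u"] by (rule finite_subset) simp
  qed
  let ?M = "replicate_mset (nat u) k'"
  have "set_mset ?M = {k'}" using assms by auto
  hence "?M \<in> {M. 0 \<le> u \<and> size M = nat u \<and> set_mset M \<subseteq> {i..k'}}"
    "?M \<notin> {M. 0 \<le> u \<and> size M = nat u \<and> set_mset M \<subseteq> {i..k}}" using assms by auto
  moreover have "{M. 0 \<le> u \<and> size M = nat u \<and> set_mset M \<subseteq> {i..k}} \<subseteq> {M. 0 \<le> u \<and> size M = nat u \<and> set_mset M \<subseteq> {i..k'}}"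
    using assms by auto
  ultimately show "{M. 0 \<le> u \<and> size M = nat u \<and> set_mset M \<subseteq> {i..k}} \<subset> {M. 0 \<le> u \<and> size M = nat u \<and> set_mset M \<subseteq> {i..k'}}"
    by blast
qed

lemma gv_strict:
  assumes "\<gamma> \<in> U_set n" "\<beta> \<in> U_set n" "\<forall>j\<in>{1..n}. \<gamma> j \<le> \<beta> j" "j0 \<in> {1..n}" "\<gamma> j0 < \<beta> j0"
  shows "gv_count n lam \<gamma> < gv_count n lam \<beta>"
proof -
  define f where "f = (\<lambda>b i j. num_monomials (h_coeff (int (lam j) - int j + int i) i (b j)))"
  define i0 where "i0 = (if 1 \<le> lam j0 then j0 else j0 + 1)"
  have bj: "\<beta> j0 \<le> n" "j0 \<le> \<gamma> j0" using U_bounds[OF assms(2), of j0] U_bounds[OF assms(1), of j0] assms(4) by auto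
  have j0: "1 \<le> j0" "j0 < \<beta> j0" using bj assms(4,5) by auto
  have i0c: "i0 \<in> {1..n} \<and> 1 \<le> int (lam j0) - int j0 + int i0 \<and> i0 \<le> \<beta> j0"
  proof (cases "1 \<le> lam j0")
    case True
    hence "i0 = j0" unfolding i0_def by simp
    then show ?thesis using True j0 bj assms(4) by auto
  next
    case False
    hence "i0 = j0 + 1" "lam j0 = 0" unfolding i0_def by auto
    then show ?thesis using j0 bj by auto
  qed
  hence i0: "i0 \<in> {1..n}" "1 \<le> int (lam j0) - int j0 + int i0" "i0 \<le> \<beta> j0" by auto
  have pw: "f \<gamma> i j \<le> f \<beta> i j" if "j \<in> {1..n}" for i j
    unfolding f_def using assms(3) that by (intro nm_mono) blast
  have inner_le: "(\<Sum>j\<in>{1..n}. f \<gamma> i j) \<le> (\<Sum>j\<in>{1..n}. f \<beta> i j)" for i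
    by (rule sum_mono) (rule pw)
  have "f \<gamma> i0 j0 < f \<beta> i0 j0" unfolding f_def using assms(5) i0(2,3) by (rule nm_strict)
  hence inner_lt: "(\<Sum>j\<in>{1..n}. f \<gamma> i0 j) < (\<Sum>j\<in>{1..n}. f \<beta> i0 j)"
    using pw assms(4) by (intro sum_strict_mono_ex1) blast+
  have "(\<Sum>i\<in>{1..n}. \<Sum>j\<in>{1..n}. f \<gamma> i j) < (\<Sum>i\<in>{1..n}. \<Sum>j\<in>{1..n}. f \<beta> i j)"
    using inner_le inner_lt i0(1) by (intro sum_strict_mono_ex1) blast+
  then show ?thesis unfolding gv_count_def f_def .
qed

lemma Mx_core:
  assumes "is_partition n lam" "\<eta> \<in> U_set n" "1 \<le> s" "s \<le> n" "1 \<le> lam s"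
  shows "Mx n lam (core n lam \<eta>) s (lam s) = core n lam \<eta> s"
proof -
  let ?d = "core n lam \<eta>"
  have dU: "?d \<in> U_set n" using core_U[OF assms(2)] .
  have D: "(s, lam s) \<in> diagram n lam" using assms by (simp add: diagram_iff)
  obtain r where r: "s \<le> r" "r \<le> n" "lam s \<le> lam r" "Mx n lam ?d s (lam s) = ?d r + s - r"
    using Mx_ex[OF D] by blast
  have "r \<le> carrel_hi n lam s" using lam_drop[OF assms(1,3,4), of r] r by force
  hence "int (?d s) - int s \<le> int (?d r) - int r" using core_mono_carrel[OF assms(2-4) r(1)] by simp
  moreover have "r \<le> ?d r" using U_bounds[OF dU, of r] r assms by auto
  ultimately have "?d s \<le> Mx n lam ?d s (lam s)" using r by simp
  moreover have "Mx n lam ?d s (lam s) \<le> ?d s" using Mx_ge[OF dU D] by simp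
  ultimately show ?thesis by simp
qed

theorem proposition8p3:
  fixes n :: nat and lam :: "nat \<Rightarrow> nat" and \<eta> :: "nat \<Rightarrow> nat"
  assumes "1 \<le> n"
    and "is_partition n lam"
    and "\<eta> \<in> UGC n lam"
  shows "gapless n lam (core n lam \<eta>) \<and> max_efficiency n lam (core n lam \<eta>)"
proof -
  let ?d = "core n lam \<eta>"
  have eU: "\<eta> \<in> U_set n" using assms(3) unfolding UGC_def by auto
  have gl: "gapless n lam ?d" using core_gapless[OF assms(2,3)] .
  have dU: "?d \<in> U_set n" using core_U[OF eU] .
  have dUGC: "?d \<in> UGC n lam" using gl unfolding gapless_def by simp
  have dUBP: "?d \<in> UBP n lam" using core_UBP[OF eU] .
  have "\<forall>\<eta>' \<in> UGC n lam \<inter> UBP n lam. \<eta>' \<noteq> ?d \<longrightarrow>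
        schur_coeff n lam \<eta>' = schur_coeff n lam ?d \<longrightarrow> gv_count n lam ?d < gv_count n lam \<eta>'"
  proof (intro ballI impI)
    fix \<eta>' assume e': "\<eta>' \<in> UGC n lam \<inter> UBP n lam" and ne: "\<eta>' \<noteq> ?d"
      and sc: "schur_coeff n lam \<eta>' = schur_coeff n lam ?d"
    have e'U: "\<eta>' \<in> U_set n" using e' unfolding UGC_def by auto
    have ge: "\<forall>s\<in>{1..n}. ?d s \<le> \<eta>' s"
    proof
      fix s assume s: "s \<in> {1..n}"
      have es: "s \<le> \<eta>' s" using U_bounds[OF e'U, of s] s by auto
      show "?d s \<le> \<eta>' s"
      proof (cases "lam s = 0")
        case True
        then show ?thesis using core_zero_row[OF assms(2) eU, of s] s es by auto
      next
        case False
        show ?thesis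
        proof (cases "?d s = s")
          case True then show ?thesis using es by simp
        next
          case False2: False
          have "s < ?d s" using core_bounds[OF eU, of s lam] s False2 by auto
          moreover have D: "(s, lam s) \<in> diagram n lam" using s False by (simp add: diagram_iff)
          moreover have "Mx n lam ?d s (lam s) = ?d s" using Mx_core[OF assms(2) eU, of s] s False by auto
          ultimately obtain j where j: "(s,j) \<in> diagram n lam" "Mx n lam \<eta>' s j = ?d s"
            using extract_row[OF assms(2) e'U dU sc] by blast
          then show ?thesis using Mx_ge[OF e'U j(1)] by simp
        qed
      qed
    qed
    have "\<exists>j0\<in>{1..n}. ?d j0 < \<eta>' j0"
    proof (rule ccontr)
      assume "\<not> (\<exists>j0\<in>{1..n}. ?d j0 < \<eta>' j0)"
      hence "\<forall>j\<in>{1..n}. \<eta>' j = ?d j" using ge by force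
      moreover have "\<forall>j. j \<notin> {1..n} \<longrightarrow> \<eta>' j = ?d j" using e'U dU unfolding U_set_def by auto
      ultimately have "\<eta>' = ?d" by blast
      thus False using ne by simp
    qed
    then obtain j0 where "j0 \<in> {1..n}" "?d j0 < \<eta>' j0" by blast
    then show "gv_count n lam ?d < gv_count n lam \<eta>'" using gv_strict[OF dU e'U ge] by blast
  qed
  then show ?thesis using gl dUGC dUBP unfolding max_efficiency_def by blast
qed

end
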